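(* Consider smoothed MaxSat/$k$-Flip on a CNF formula with $n$ variables and $m$ clauses, where each clause weight $w_i$ is drawn independently from a distribution with density $f_i:[0,1]\to[0,\phi]$, and let $B$ be the maximum number of clauses in which any variable occurs. Then the expected maximum number of iterations of local search (over all initial assignments and all improving sequences) is $O(3^{kB}n^k m^2\phi)$, with an absolute hidden constant.
   Context: MaxSat/$k$-Flip: given a CNF formula with clauses $C_1,\dots,C_m$ over Boolean variables $x_1,\dots,x_n$ and clause weights $w_1,\dots,w_m$, the weight of a truth assignment is the total weight of satisfied clauses; the $k$-Flip neighbours of an assignment are those obtained by changing the truth value of at most $k$ variables; a solution is an assignment with no neighbour of strictly larger weight. Local search repeatedly moves to a strictly better neighbour. *)

theory Defs
  imports "HOL-Probability.Probability"
begin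

text \<open>A literal is a pair (variable index, polarity); a clause is a finite set of
literals; a CNF formula is a list of clauses C_0, ..., C_{m-1}.\<close>

type_synonym literal = "nat \<times> bool"
type_synonym clause = "literal set"
type_synonym cnf = "clause list"

definition assignments :: "nat \<Rightarrow> (nat \<Rightarrow> bool) set" where
  "assignments n = {a. \<forall>x. n \<le> x \<longrightarrow> \<not> a x}"

definition wf_cnf :: "nat \<Rightarrow> cnf \<Rightarrow> bool" where
  "wf_cnf n F \<longleftrightarrow> (\<forall>C\<in>set F. finite C \<and> (\<forall>l\<in>C. fst l < n))"

definition lit_sat :: "(nat \<Rightarrow> bool) \<Rightarrow> literal \<Rightarrow> bool" where
  "lit_sat a l \<longleftrightarrow> a (fst l) = snd l"

definition clause_sat :: "(nat \<Rightarrow> bool) \<Rightarrow> clause \<Rightarrow> bool" where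
  "clause_sat a C \<longleftrightarrow> (\<exists>l\<in>C. lit_sat a l)"

definition cnf_weight :: "cnf \<Rightarrow> (nat \<Rightarrow> real) \<Rightarrow> (nat \<Rightarrow> bool) \<Rightarrow> real" where
  "cnf_weight F w a = (\<Sum>i<length F. if clause_sat a (F ! i) then w i else 0)"

definition kflip_neighbour :: "nat \<Rightarrow> nat \<Rightarrow> (nat \<Rightarrow> bool) \<Rightarrow> (nat \<Rightarrow> bool) \<Rightarrow> bool" where
  "kflip_neighbour n k a b \<longleftrightarrow> b \<in> assignments n \<and> card {x. x < n \<and> a x \<noteq> b x} \<le> k"

definition improving_step :: "nat \<Rightarrow> nat \<Rightarrow> cnf \<Rightarrow> (nat \<Rightarrow> real) \<Rightarrow> (nat \<Rightarrow> bool) \<Rightarrow> (nat \<Rightarrow> bool) \<Rightarrow> bool" where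
  "improving_step n k F w a b \<longleftrightarrow> kflip_neighbour n k a b \<and> cnf_weight F w a < cnf_weight F w b"

definition improving_seq :: "nat \<Rightarrow> nat \<Rightarrow> cnf \<Rightarrow> (nat \<Rightarrow> real) \<Rightarrow> (nat \<Rightarrow> bool) list \<Rightarrow> bool" where
  "improving_seq n k F w s \<longleftrightarrow> s \<noteq> [] \<and> hd s \<in> assignments n \<and>
     (\<forall>j. Suc j < length s \<longrightarrow> improving_step n k F w (s ! j) (s ! Suc j))"

definition max_iterations :: "nat \<Rightarrow> nat \<Rightarrow> cnf \<Rightarrow> (nat \<Rightarrow> real) \<Rightarrow> ennreal" where
  "max_iterations n k F w = (SUP s\<in>{s. improving_seq n k F w s}. of_nat (length s - 1))"

definition occurrences :: "cnf \<Rightarrow> nat \<Rightarrow> nat" where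
  "occurrences F x = card {i. i < length F \<and> (\<exists>b. (x, b) \<in> F ! i)}"

definition max_occurrence :: "nat \<Rightarrow> cnf \<Rightarrow> nat" where
  "max_occurrence n F = Max (insert 0 (occurrences F ` {..<n}))"

definition density_bounded :: "real \<Rightarrow> (real \<Rightarrow> real) \<Rightarrow> bool" where
  "density_bounded \<phi> g \<longleftrightarrow> g \<in> borel_measurable lborel \<and>
     (\<forall>x. 0 \<le> g x \<and> g x \<le> \<phi>) \<and> (\<forall>x. x \<notin> {0..1} \<longrightarrow> g x = 0) \<and>
     (\<integral>\<^sup>+ x. ennreal (g x) \<partial>lborel) = 1"

definition weight_distr :: "nat \<Rightarrow> (nat \<Rightarrow> real \<Rightarrow> real) \<Rightarrow> (nat \<Rightarrow> real) measure" where
  "weight_distr m f = PiM {..<m} (\<lambda>i. density lborel (\<lambda>x. ennreal (f i x)))"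

end

theory Submission
  imports Defs
begin

lemma dens_meas: "density_bounded \<phi> g \<Longrightarrow> (\<lambda>x. ennreal (g x)) \<in> borel_measurable borel"
  unfolding density_bounded_def by (simp add: measurable_lborel1)

lemma dens_prob: "density_bounded \<phi> g \<Longrightarrow> prob_space (density lborel (\<lambda>x. ennreal (g x)))"
  apply (rule prob_spaceI)
  apply (subst emeasure_density)
  using dens_meas[of \<phi> g] unfolding density_bounded_def by (auto simp: measurable_lborel1)

lemma interval_bound:
  assumes d: "density_bounded \<phi> g" and A: "A \<in> sets borel" and sub: "A \<subseteq> {l..l+e}" and e: "e \<ge> 0"
  shows "emeasure (density lborel (\<lambda>x. ennreal (g x))) A \<le> ennreal (\<phi>*e)"
proof -
  have ph: "\<phi> \<ge> 0" using d unfolding density_bounded_def by (meson order_trans)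
  have "emeasure (density lborel (\<lambda>x. ennreal (g x))) A = (\<integral>\<^sup>+x\<in>A. ennreal (g x) \<partial>lborel)"
    using A dens_meas[OF d] by (subst emeasure_density) (auto simp: measurable_lborel1)
  also have "\<dots> \<le> (\<integral>\<^sup>+x. ennreal \<phi> * indicator {l..l+e} x \<partial>lborel)"
    apply (rule nn_integral_mono)
    using d sub unfolding density_bounded_def by (auto simp: indicator_def intro!: ennreal_leI)
  also have "\<dots> = ennreal \<phi> * emeasure lborel {l..l+e}"
    by (subst nn_integral_cmult_indicator) auto
  also have "\<dots> = ennreal (\<phi>*e)" using e ph by (simp add: ennreal_mult)
  finally show ?thesis .
qed


lemma weight_distr_alt:
  "weight_distr m f = PiM {..<m} (\<lambda>i. if i < m then density lborel (\<lambda>x. ennreal (f i x)) else return lborel 0)"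
  unfolding weight_distr_def by (rule PiM_cong) auto

lemma event_bound:
  fixes c :: "nat \<Rightarrow> real"
  assumes j: "j < m" and cj: "c j = 1 \<or> c j = -1"
    and dens: "\<forall>i<m. density_bounded \<phi> (f i)" and e: "e \<ge> 0"
  shows "emeasure (weight_distr m f)
     {w \<in> space (weight_distr m f). 0 < (\<Sum>i<m. c i * w i) \<and> (\<Sum>i<m. c i * w i) \<le> e} \<le> ennreal (\<phi>*e)"
proof -
  define M' where "M' = (\<lambda>i. if i < m then density lborel (\<lambda>x. ennreal (f i x)) else return lborel (0::real))"
  have probM: "prob_space (M' i)" for i
    unfolding M'_def using dens dens_prob by (auto intro: prob_space_return)
  interpret product_sigma_finite M'
    unfolding product_sigma_finite_def using probM prob_space_imp_sigma_finite by auto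
  have setsM: "sets (M' i) = sets borel" for i unfolding M'_def by auto
  have spM: "space (M' i) = UNIV" for i using setsM[of i] sets_eq_imp_space_eq by fastforce
  define I where "I = {..<m} - {j}"
  have IJ: "insert j I = {..<m}" "j \<notin> I" "finite I" using j unfolding I_def by auto
  define g where "g = (\<lambda>w::nat\<Rightarrow>real. \<Sum>i<m. c i * w i)"
  define E where "E = {w \<in> space (PiM {..<m} M'). 0 < g w \<and> g w \<le> e}"
  have gm: "g \<in> borel_measurable (PiM {..<m} M')"
    unfolding g_def
    apply (intro borel_measurable_sum borel_measurable_times borel_measurable_const)
    subgoal for i
      using measurable_component_singleton[of i "{..<m}" M'] measurable_cong_sets[OF refl setsM[of i], of "PiM {..<m} M'"] by auto
    done
  have Em: "E \<in> sets (PiM {..<m} M')"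
    unfolding E_def using gm by measurable
  have ph: "\<phi> \<ge> 0" using dens j unfolding density_bounded_def by (meson order_trans)
  have inner: "(\<integral>\<^sup>+ y. indicator E (x(j := y)) \<partial>M' j) \<le> ennreal (\<phi>*e)"
    if x: "x \<in> space (PiM I M')" for x
  proof -
    define r where "r = (\<Sum>i\<in>I. c i * x i)"
    define S where "S = {y. 0 < c j * y + r \<and> c j * y + r \<le> e}"
    have gx: "g (x(j:=y)) = c j * y + r" for y
    proof -
      have "g (x(j:=y)) = (\<Sum>i\<in>insert j I. c i * (x(j:=y)) i)" unfolding g_def IJ(1) by simp
      also have "\<dots> = c j * y + (\<Sum>i\<in>I. c i * (x(j:=y)) i)" by (subst sum.insert[OF IJ(3) IJ(2)]) simp
      also have "(\<Sum>i\<in>I. c i * (x(j:=y)) i) = r" unfolding r_def using IJ by (intro sum.cong) auto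
      finally show ?thesis .
    qed
    have spx: "x(j:=y) \<in> space (PiM {..<m} M')" for y
      using x unfolding space_PiM spM IJ(1)[symmetric] by (auto simp: PiE_def extensional_def)
    have "indicator E (x(j := y)) = (indicator S y :: ennreal)" for y
      unfolding E_def S_def using spx[of y] gx[of y] by (auto simp: indicator_def)
    then have "(\<integral>\<^sup>+ y. indicator E (x(j := y)) \<partial>M' j) = (\<integral>\<^sup>+ y. indicator S y \<partial>M' j)" by simp
    also have SS: "S \<in> sets borel \<and> (\<exists>l. S \<subseteq> {l..l+e})"
    proof (cases "c j = 1")
      case True
      then have "S = {-r<..e-r}" unfolding S_def by auto
      then show ?thesis by (intro conjI exI[of _ "-r"]) auto
    next
      case False
      then have "c j = -1" using cj by auto
      then have "S = {r-e..<r}" unfolding S_def by auto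
      then show ?thesis by (intro conjI exI[of _ "r-e"]) auto
    qed
    then have "(\<integral>\<^sup>+ y. indicator S y \<partial>M' j) = emeasure (M' j) S"
      using setsM by (intro nn_integral_indicator) auto
    also have "\<dots> \<le> ennreal (\<phi>*e)"
      using SS interval_bound[of \<phi> "f j" S _ e] dens j e unfolding M'_def by auto
    finally show ?thesis .
  qed
  have "emeasure (PiM {..<m} M') E = (\<integral>\<^sup>+ w. indicator E w \<partial>PiM {..<m} M')"
    using Em by simp
  also have "\<dots> = (\<integral>\<^sup>+ x. (\<integral>\<^sup>+ y. indicator E (x(j := y)) \<partial>M' j) \<partial>PiM I M')"
    using product_nn_integral_insert[OF IJ(3) IJ(2), of "indicator E"] Em IJ(1) by simp
  also have "\<dots> \<le> (\<integral>\<^sup>+ x. ennreal (\<phi>*e) \<partial>PiM I M')"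
    by (intro nn_integral_mono inner)
  also have "\<dots> = ennreal (\<phi>*e)"
  proof -
    interpret prob_space "PiM I M'" by (rule prob_space_PiM) (use probM in auto)
    show ?thesis by (simp add: emeasure_space_1)
  qed
  finally show ?thesis
    unfolding weight_distr_alt M'_def[symmetric] E_def g_def .
qed


definition sat_r :: "(nat \<Rightarrow> bool) \<Rightarrow> clause \<Rightarrow> real" where
  "sat_r a C = (if clause_sat a C then 1 else 0)"

definition coef :: "cnf \<Rightarrow> (nat \<Rightarrow> bool) \<Rightarrow> (nat \<Rightarrow> bool) \<Rightarrow> nat \<Rightarrow> real" where
  "coef F a b = (\<lambda>i. if i < length F then sat_r b (F!i) - sat_r a (F!i) else 0)"

definition Pset :: "nat \<Rightarrow> nat \<Rightarrow> cnf \<Rightarrow> (nat \<Rightarrow> real) set" where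
  "Pset n k F = {coef F a b | a b. kflip_neighbour n k a b \<and> coef F a b \<noteq> (\<lambda>_. 0)}"

definition Occ :: "cnf \<Rightarrow> nat \<Rightarrow> nat set" where
  "Occ F x = {i. i < length F \<and> (\<exists>b. (x, b) \<in> F ! i)}"

definition IS :: "cnf \<Rightarrow> nat set \<Rightarrow> nat set" where
  "IS F S = (\<Union>x\<in>S. Occ F x)"

definition Q :: "cnf \<Rightarrow> nat set \<Rightarrow> (nat \<Rightarrow> real) set" where
  "Q F S = (\<lambda>h i. if i \<in> IS F S then h i else 0) ` PiE (IS F S) (\<lambda>_. {-1,0,1})"

lemma W_diff: "cnf_weight F w b - cnf_weight F w a = (\<Sum>i<length F. coef F a b i * w i)"
  unfolding cnf_weight_def coef_def sat_r_def
  by (simp add: sum_subtractf[symmetric]) (intro sum.cong, auto)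

lemma occ_le: "x < n \<Longrightarrow> card (Occ F x) \<le> max_occurrence n F"
  unfolding max_occurrence_def occurrences_def Occ_def[symmetric]
  by (rule Max_ge) auto

lemma IS_finite: "finite (IS F S)"
  by (rule finite_subset[of _ "{..<length F}"]) (auto simp: IS_def Occ_def)

lemma card_Q: "finite S \<Longrightarrow> S \<subseteq> {..<n} \<Longrightarrow> card S \<le> k \<Longrightarrow> card (Q F S) \<le> 3 ^ (k * max_occurrence n F)"
proof -
  assume S: "finite S" "S \<subseteq> {..<n}" "card S \<le> k"
  have "card (Q F S) \<le> card (PiE (IS F S) (\<lambda>_. {-1,0,1::real}))"
    unfolding Q_def by (rule card_image_le) (simp add: IS_finite finite_PiE)
  also have "\<dots> = 3 ^ card (IS F S)"
    using IS_finite by (simp add: card_PiE eval_nat_numeral)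
  also have "card (IS F S) \<le> k * max_occurrence n F"
  proof -
    have "card (IS F S) \<le> (\<Sum>x\<in>S. card (Occ F x))" unfolding IS_def by (rule card_UN_le) fact
    also have "\<dots> \<le> (\<Sum>x\<in>S. max_occurrence n F)" using S occ_le by (intro sum_mono) auto
    also have "\<dots> = card S * max_occurrence n F" by simp
    also have "\<dots> \<le> k * max_occurrence n F" using S by simp
    finally show ?thesis .
  qed
  then have "(3::nat) ^ card (IS F S) \<le> 3 ^ (k * max_occurrence n F)" by (rule power_increasing) auto
  finally show ?thesis .
qed

lemma surj_from_k:
  assumes "finite D" "D \<noteq> {}" "card D \<le> k" "D \<subseteq> {..<n}"
  shows "\<exists>g\<in>PiE {..<k} (\<lambda>_. {..<n}). g ` {..<k} = D"
proof -
  obtain h where h: "bij_betw h {0..<card D} D" using ex_bij_betw_nat_finite assms(1) by blast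
  have cD: "card D > 0" using assms by auto
  define g where "g = (\<lambda>i. if i < k then h (min i (card D - 1)) else undefined)"
  have hin: "t < card D \<Longrightarrow> h t \<in> D" for t using h by (auto simp: bij_betw_def)
  have "g ` {..<k} \<subseteq> D" unfolding g_def using hin cD by auto
  moreover have "D \<subseteq> g ` {..<k}"
  proof
    fix d assume "d \<in> D"
    then obtain t where t: "t < card D" "d = h t" using h by (metis (no_types, lifting) atLeastLessThan_iff bij_betw_def imageE)
    then have "g t = d" unfolding g_def using assms(3) by auto
    moreover have "t \<in> {..<k}" using t assms(3) by simp
    ultimately show "d \<in> g ` {..<k}" by (metis imageI)
  qed
  ultimately have "g ` {..<k} = D" by blast
  moreover have "g \<in> PiE {..<k} (\<lambda>_. {..<n})"
  proof -
    have "h (min i (card D - 1)) \<in> D" for i using hin cD by simp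
    then show ?thesis unfolding g_def using assms(4) by (auto simp: PiE_def extensional_def subset_iff)
  qed
  ultimately show ?thesis by blast
qed

lemma coef_in_Q:
  assumes wf: "wf_cnf n F" and kb: "kflip_neighbour n k a b" and nz: "coef F a b \<noteq> (\<lambda>_. 0)"
  shows "\<exists>g\<in>PiE {..<k} (\<lambda>_. {..<n}). coef F a b \<in> Q F (g ` {..<k})"
proof -
  define D where "D = {x. x < n \<and> a x \<noteq> b x}"
  have cD: "card D \<le> k" using kb unfolding kflip_neighbour_def D_def by simp
  have fD: "finite D" "D \<subseteq> {..<n}" unfolding D_def by auto
  have zero: "coef F a b i = 0" if ni: "i \<notin> IS F D" for i
  proof (cases "i < length F")
    case True
    have "clause_sat a (F!i) = clause_sat b (F!i)"
    proof -
      have "lit_sat a l = lit_sat b l" if l: "l \<in> F!i" for l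
      proof -
        have "fst l < n" using wf True l unfolding wf_cnf_def by auto
        moreover have "fst l \<notin> D"
        proof
          assume "fst l \<in> D"
          then have "i \<in> Occ F (fst l)" unfolding Occ_def using True l by (cases l) auto
          then show False using ni \<open>fst l \<in> D\<close> unfolding IS_def by auto
        qed
        ultimately show ?thesis unfolding lit_sat_def D_def by auto
      qed
      then show ?thesis unfolding clause_sat_def by auto
    qed
    then show ?thesis unfolding coef_def sat_r_def by simp
  next
    case False then show ?thesis unfolding coef_def by simp
  qed
  have Dne: "D \<noteq> {}"
  proof
    assume "D = {}"
    then have "coef F a b i = 0" for i using zero unfolding IS_def by auto
    then show False using nz by auto
  qed
  obtain g where g: "g \<in> PiE {..<k} (\<lambda>_. {..<n})" "g ` {..<k} = D"
    using surj_from_k[OF fD(1) Dne cD fD(2)] by blast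
  have vals: "coef F a b i \<in> {-1,0,1}" for i unfolding coef_def sat_r_def by auto
  have "coef F a b = (\<lambda>i. if i \<in> IS F D then restrict (coef F a b) (IS F D) i else 0)"
    using zero by auto
  moreover have "restrict (coef F a b) (IS F D) \<in> PiE (IS F D) (\<lambda>_. {-1,0,1})"
    using vals by auto
  ultimately have "coef F a b \<in> Q F D" unfolding Q_def by blast
  then show ?thesis using g by auto
qed

lemma Pset_card:
  assumes wf: "wf_cnf n F"
  shows "finite (Pset n k F) \<and> card (Pset n k F) \<le> n ^ k * 3 ^ (k * max_occurrence n F)"
proof -
  let ?G = "PiE {..<k} (\<lambda>_. {..<n::nat})"
  have sub: "Pset n k F \<subseteq> (\<Union>g\<in>?G. Q F (g ` {..<k}))"
    unfolding Pset_def using coef_in_Q[OF wf] by blast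
  have fG: "finite ?G" by (simp add: finite_PiE)
  have gS: "g \<in> ?G \<Longrightarrow> finite (g ` {..<k}) \<and> g ` {..<k} \<subseteq> {..<n} \<and> card (g ` {..<k}) \<le> k" for g
    using card_image_le[of "{..<k}" g] by (auto simp: PiE_def Pi_def)
  have fQ: "g \<in> ?G \<Longrightarrow> finite (Q F (g ` {..<k}))" for g
    unfolding Q_def by (simp add: IS_finite finite_PiE)
  have fin: "finite (\<Union>g\<in>?G. Q F (g ` {..<k}))" using fG fQ by auto
  have "card (Pset n k F) \<le> card (\<Union>g\<in>?G. Q F (g ` {..<k}))" by (rule card_mono[OF fin sub])
  also have "\<dots> \<le> (\<Sum>g\<in>?G. card (Q F (g ` {..<k})))" by (rule card_UN_le[OF fG])
  also have "\<dots> \<le> (\<Sum>g\<in>?G. 3 ^ (k * max_occurrence n F))"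
    using gS card_Q by (intro sum_mono) blast
  also have "\<dots> = n ^ k * 3 ^ (k * max_occurrence n F)"
    by (simp add: card_PiE)
  finally show ?thesis using finite_subset[OF sub fin] by simp
qed

lemma Pset_nz: "c \<in> Pset n k F \<Longrightarrow> \<exists>j<length F. c j = 1 \<or> c j = -1"
proof -
  assume "c \<in> Pset n k F"
  then obtain a b where c: "c = coef F a b" "c \<noteq> (\<lambda>_. 0)" unfolding Pset_def by auto
  then obtain j where "c j \<noteq> 0" by auto
  then show ?thesis unfolding c coef_def sat_r_def by (auto split: if_splits)
qed

lemma harm2: "(\<Sum>t\<in>{1..(2::nat)^m}. 1 / real t) \<le> real m + 1"
proof (induction m)
  case 0 then show ?case by simp
next
  case (Suc m)
  have un: "{1..(2::nat)^Suc m} = {1..2^m} \<union> {2^m+1..2^Suc m}" by auto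
  have "(\<Sum>t\<in>{(2::nat)^m+1..2^Suc m}. 1 / real t) \<le> card {(2::nat)^m+1..2^Suc m} * (1 / 2^m)"
    by (rule sum_bounded_above) (auto simp: frac_le)
  also have "\<dots> = 1" by simp
  finally have h: "(\<Sum>t\<in>{(2::nat)^m+1..2^Suc m}. 1 / real t) \<le> 1" .
  have "(\<Sum>t\<in>{1..(2::nat)^Suc m}. 1 / real t) = (\<Sum>t\<in>{1..2^m}. 1 / real t) + (\<Sum>t\<in>{(2::nat)^m+1..2^Suc m}. 1 / real t)"
    unfolding un by (rule sum.union_disjoint) auto
  then show ?case using Suc h by simp
qed


lemma seq_step:
  assumes "improving_seq n k F w s" "Suc j < length s"
  shows "coef F (s!j) (s!Suc j) \<in> Pset n k F \<and> 0 < (\<Sum>i<length F. coef F (s!j) (s!Suc j) i * w i)"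
proof -
  have st: "improving_step n k F w (s!j) (s!Suc j)" using assms unfolding improving_seq_def by auto
  then have pos: "0 < (\<Sum>i<length F. coef F (s!j) (s!Suc j) i * w i)"
    unfolding improving_step_def using W_diff[of F w "s!Suc j" "s!j"] by simp
  then have "coef F (s!j) (s!Suc j) \<noteq> (\<lambda>_. 0)" by auto
  then show ?thesis using pos st unfolding improving_step_def Pset_def by blast
qed

lemma seq_mono:
  assumes "improving_seq n k F w s"
  shows "j < length s \<Longrightarrow> i < j \<Longrightarrow> cnf_weight F w (s!i) < cnf_weight F w (s!j)"
proof (induction j)
  case 0 then show ?case by simp
next
  case (Suc j)
  have st: "cnf_weight F w (s!j) < cnf_weight F w (s!Suc j)"
    using assms Suc.prems unfolding improving_seq_def improving_step_def by auto
  show ?case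
  proof (cases "i = j")
    case True then show ?thesis using st by simp
  next
    case False then show ?thesis using Suc st by auto
  qed
qed

lemma seq_len:
  assumes "improving_seq n k F w s"
  shows "length s \<le> 2 ^ length F"
proof -
  define ss where "ss = (\<lambda>a. {i. i < length F \<and> clause_sat a (F!i)})"
  have W: "ss a = ss b \<Longrightarrow> cnf_weight F w a = cnf_weight F w b" for a b
    unfolding cnf_weight_def ss_def by (intro sum.cong) (auto simp: set_eq_iff)
  have "inj_on (\<lambda>j. ss (s!j)) {..<length s}"
  proof (rule inj_onI)
    fix i j assume ij: "i \<in> {..<length s}" "j \<in> {..<length s}" "ss (s!i) = ss (s!j)"
    show "i = j"
    proof (rule ccontr)
      assume "i \<noteq> j"
      then consider "i < j" | "j < i" by linarith
      then show False using seq_mono[OF assms] ij W[OF ij(3)] by cases (auto, fastforce+)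
    qed
  qed
  moreover have "(\<lambda>j. ss (s!j)) ` {..<length s} \<subseteq> Pow {..<length F}" unfolding ss_def by auto
  ultimately have "card {..<length s} \<le> card (Pow {..<length F})"
    by (intro card_inj_on_le) auto
  then show ?thesis by (simp add: card_Pow)
qed

lemma W_range:
  assumes "\<forall>i<length F. 0 \<le> w i \<and> w i \<le> 1"
  shows "0 \<le> cnf_weight F w a \<and> cnf_weight F w a \<le> real (length F)"
proof
  show "0 \<le> cnf_weight F w a" unfolding cnf_weight_def using assms by (intro sum_nonneg) auto
  have "cnf_weight F w a \<le> (\<Sum>i<length F. 1)" unfolding cnf_weight_def using assms by (intro sum_mono) auto
  then show "cnf_weight F w a \<le> real (length F)" by simp
qed

lemma exists_small:
  assumes s: "improving_seq n k F w s" and w: "\<forall>i<length F. 0 \<le> w i \<and> w i \<le> 1"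
    and t: "1 \<le> t" "t \<le> length s - 1"
  shows "\<exists>c\<in>Pset n k F. 0 < (\<Sum>i<length F. c i * w i) \<and> (\<Sum>i<length F. c i * w i) \<le> real (length F) / real t"
proof (rule ccontr)
  assume ne: "\<not> ?thesis"
  define L where "L = length s - 1"
  define d where "d = (\<lambda>j. cnf_weight F w (s!Suc j) - cnf_weight F w (s!j))"
  have big: "real (length F) / real t < d j" if "j < L" for j
  proof -
    have "Suc j < length s" using that unfolding L_def by linarith
    from seq_step[OF s this] ne show ?thesis unfolding d_def W_diff by force
  qed
  have L0: "0 < L" using t unfolding L_def by linarith
  have "(\<Sum>j<L. real (length F) / real t) < (\<Sum>j<L. d j)"
    using L0 big by (intro sum_strict_mono) auto
  also have "(\<Sum>j<L. d j) = cnf_weight F w (s!L) - cnf_weight F w (s!0)"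
    unfolding d_def by (rule sum_lessThan_telescope)
  also have "\<dots> \<le> real (length F)" using W_range[OF w, of "s!L"] W_range[OF w, of "s!0"] by linarith
  finally have "real L * (real (length F) / real t) < real (length F)" by simp
  moreover have "real (length F) \<le> real L * (real (length F) / real t)"
  proof -
    have "real t \<le> real L" using t unfolding L_def by simp
    then have "real t * (real (length F) / real t) \<le> real L * (real (length F) / real t)"
      by (intro mult_right_mono) auto
    then show ?thesis using t by simp
  qed
  ultimately show False by simp
qed


lemma event_sets:
  fixes c :: "nat \<Rightarrow> real"
  shows "{w \<in> space (weight_distr m f). 0 < (\<Sum>i<m. c i * w i) \<and> (\<Sum>i<m. c i * w i) \<le> e} \<in> sets (weight_distr m f)"
proof -
  define M where "M = (\<lambda>i. density lborel (\<lambda>x. ennreal (f i x)))"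
  have setsM: "sets (M i) = sets borel" for i unfolding M_def by auto
  define g where "g = (\<lambda>w::nat\<Rightarrow>real. \<Sum>i<m. c i * w i)"
  have gm: "g \<in> borel_measurable (PiM {..<m} M)"
    unfolding g_def
    apply (intro borel_measurable_sum borel_measurable_times borel_measurable_const)
    subgoal for i
      using measurable_component_singleton[of i "{..<m}" M] measurable_cong_sets[OF refl setsM[of i], of "PiM {..<m} M"] by auto
    done
  have "{w \<in> space (PiM {..<m} M). 0 < g w \<and> g w \<le> e} \<in> sets (PiM {..<m} M)"
    using gm by measurable
  then show ?thesis unfolding weight_distr_def M_def[symmetric] g_def .
qed

lemma AE_unit:
  assumes dens: "\<forall>i<m. density_bounded \<phi> (f i)"
  shows "AE w in weight_distr m f. w \<in> space (weight_distr m f) \<and> (\<forall>i<m. 0 \<le> w i \<and> w i \<le> 1)"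
proof -
  have "AE w in weight_distr m f. 0 \<le> w i \<and> w i \<le> 1" if i: "i < m" for i
    unfolding weight_distr_def
  proof (rule AE_PiM_component)
    show "prob_space (density lborel (\<lambda>x. ennreal (f j x)))" if "j \<in> {..<m}" for j
      using dens that dens_prob by auto
    show "i \<in> {..<m}" using i by simp
    have fi: "density_bounded \<phi> (f i)" using dens i by auto
    show "AE x in density lborel (\<lambda>x. ennreal (f i x)). 0 \<le> x \<and> x \<le> 1"
      apply (subst AE_density)
      using dens_meas[OF fi] apply (simp add: measurable_lborel1)
      apply (rule AE_I2)
      using fi unfolding density_bounded_def by (auto simp: not_le) (smt (verit))+
  qed
  then have "AE w in weight_distr m f. \<forall>i\<in>{..<m}. 0 \<le> w i \<and> w i \<le> 1"
    by (intro eventually_ball_finite) auto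
  then show ?thesis using AE_space by eventually_elim auto
qed

definition Ev :: "nat \<Rightarrow> (nat \<Rightarrow> real \<Rightarrow> real) \<Rightarrow> (nat \<Rightarrow> real) \<Rightarrow> nat \<Rightarrow> (nat \<Rightarrow> real) set" where
  "Ev m f c t = {w \<in> space (weight_distr m f). 0 < (\<Sum>i<m. c i * w i) \<and> (\<Sum>i<m. c i * w i) \<le> real m / real t}"

lemma pointwise:
  assumes wf: "wf_cnf n F" and wsp: "w \<in> space (weight_distr (length F) f)"
    and w: "\<forall>i<length F. 0 \<le> w i \<and> w i \<le> 1"
  shows "max_iterations n k F w \<le>
    (\<Sum>t\<in>{1..2^length F}. \<Sum>c\<in>Pset n k F. indicator (Ev (length F) f c t) w)"
  unfolding max_iterations_def
proof (rule SUP_least)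
  fix s assume "s \<in> {s. improving_seq n k F w s}"
  then have s: "improving_seq n k F w s" by simp
  define L where "L = length s - 1"
  define inner where "inner = (\<lambda>t. \<Sum>c\<in>Pset n k F. (indicator (Ev (length F) f c t) w :: ennreal))"
  have fP: "finite (Pset n k F)" using Pset_card[OF wf, of k] by simp
  have "of_nat L = (\<Sum>t\<in>{1..L}. (1::ennreal))" by simp
  also have "\<dots> \<le> (\<Sum>t\<in>{1..L}. inner t)"
  proof (rule sum_mono)
    fix t assume "t \<in> {1..L}"
    then obtain c where c: "c \<in> Pset n k F" "0 < (\<Sum>i<length F. c i * w i)"
       "(\<Sum>i<length F. c i * w i) \<le> real (length F) / real t"
      using exists_small[OF s w, of t] unfolding L_def by auto
    then have "w \<in> Ev (length F) f c t" using wsp unfolding Ev_def by auto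
    then have "1 = (indicator (Ev (length F) f c t) w :: ennreal)" by simp
    also have "\<dots> \<le> inner t" unfolding inner_def by (rule member_le_sum[OF c(1)]) (auto simp: fP)
    finally show "1 \<le> inner t" .
  qed
  also have "\<dots> \<le> (\<Sum>t\<in>{1..2^length F}. inner t)"
    using seq_len[OF s] unfolding L_def by (intro sum_mono2) auto
  finally show "of_nat (length s - 1) \<le> (\<Sum>t\<in>{1..2^length F}. \<Sum>c\<in>Pset n k F. indicator (Ev (length F) f c t) w :: ennreal)"
    unfolding L_def inner_def .
qed


theorem mainTheorem10:
  "\<exists>c::real. c > 0 \<and>
     (\<forall>(n::nat) (k::nat) (F::cnf) (f::nat \<Rightarrow> real \<Rightarrow> real) (\<phi>::real).
        wf_cnf n F \<longrightarrow> (\<forall>i<length F. density_bounded \<phi> (f i)) \<longrightarrow>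
        (\<integral>\<^sup>+ w. max_iterations n k F w \<partial>weight_distr (length F) f)
          \<le> ennreal (c * 3 ^ (k * max_occurrence n F) * real n ^ k * real (length F) ^ 2 * \<phi>))"
proof (intro exI[of _ 2] conjI allI impI)
  fix n k :: nat and F :: cnf and f :: "nat \<Rightarrow> real \<Rightarrow> real" and \<phi> :: real
  assume wf: "wf_cnf n F" and dens: "\<forall>i<length F. density_bounded \<phi> (f i)"
  define m where "m = length F"
  define P where "P = Pset n k F"
  define W where "W = weight_distr m f"
  define N where "N = n ^ k * 3 ^ (k * max_occurrence n F)"
  have fP: "finite P" and cP: "card P \<le> N" using Pset_card[OF wf, of k] unfolding P_def N_def by auto
  have Pm: "c \<in> P \<Longrightarrow> \<exists>j<m. c j = 1 \<or> c j = -1" for c using Pset_nz unfolding P_def m_def by blast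
  have ph: "P \<noteq> {} \<Longrightarrow> \<phi> \<ge> 0"
  proof -
    assume "P \<noteq> {}"
    then obtain c where "c \<in> P" by auto
    then obtain j where "j < m" using Pm by auto
    then have "density_bounded \<phi> (f j)" using dens unfolding m_def by auto
    then show "\<phi> \<ge> 0" unfolding density_bounded_def by (meson order_trans)
  qed
  have Evs: "Ev m f c t \<in> sets W" for c t unfolding Ev_def W_def by (rule event_sets)
  have "(\<integral>\<^sup>+ w. max_iterations n k F w \<partial>W) \<le>
      (\<integral>\<^sup>+ w. (\<Sum>t\<in>{1..2^m}. \<Sum>c\<in>P. indicator (Ev m f c t) w) \<partial>W)"
    apply (rule nn_integral_mono_AE)
    using AE_unit[OF dens] unfolding W_def m_def P_def
    by eventually_elim (rule pointwise[OF wf], auto)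
  also have "\<dots> = (\<Sum>t\<in>{1..2^m}. \<Sum>c\<in>P. emeasure W (Ev m f c t))"
    apply (subst nn_integral_sum)
     apply (intro borel_measurable_sum borel_measurable_indicator Evs)
    apply (rule sum.cong[OF refl])
    apply (subst nn_integral_sum)
     apply (intro borel_measurable_sum borel_measurable_indicator Evs)
    apply (rule sum.cong[OF refl])
    using Evs by simp
  also have "\<dots> \<le> (\<Sum>t\<in>{1..2^m}. \<Sum>c\<in>P. ennreal (\<phi> * (real m / real t)))"
  proof (intro sum_mono)
    fix t :: nat and c assume "t \<in> {1..2^m}" "c \<in> P"
    then obtain j where "j < m" "c j = 1 \<or> c j = -1" using Pm by blast
    then show "emeasure W (Ev m f c t) \<le> ennreal (\<phi> * (real m / real t))"
      using event_bound[of j m c \<phi> f "real m / real t"] dens unfolding W_def Ev_def m_def by auto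
  qed
  also have "\<dots> \<le> ennreal (2 * 3 ^ (k * max_occurrence n F) * real n ^ k * real m ^ 2 * \<phi>)"
  proof (cases "P = {}")
    case True then show ?thesis by simp
  next
    case False
    have p0: "\<phi> \<ge> 0" using ph False by auto
    have eq: "(\<Sum>t\<in>{1..2^m}. \<Sum>c\<in>P. ennreal (\<phi> * (real m / real t))) =
        ennreal (\<Sum>t\<in>{1..2^m}. \<Sum>c\<in>P. \<phi> * (real m / real t))"
    proof -
      have i: "(\<Sum>c\<in>P. ennreal (\<phi> * (real m / real t))) = ennreal (\<Sum>c\<in>P. \<phi> * (real m / real t))" for t :: nat
        by (rule sum_ennreal) (use p0 in auto)
      show ?thesis unfolding i by (rule sum_ennreal) (use p0 in \<open>auto intro!: sum_nonneg\<close>)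
    qed
    have "(\<Sum>t\<in>{1..2^m}. \<Sum>c\<in>P. \<phi> * (real m / real t)) =
        real (card P) * \<phi> * real m * (\<Sum>t\<in>{1..(2::nat)^m}. 1 / real t)"
      by (simp add: sum_distrib_left mult.assoc)
    also have "\<dots> \<le> real N * \<phi> * real m * (real m + 1)"
      using cP p0 harm2[of m] by (intro mult_mono) (auto intro: sum_nonneg)
    also have "\<dots> \<le> real N * \<phi> * (2 * real m ^ 2)"
    proof -
      have "real m * (real m + 1) \<le> 2 * real m ^ 2"
        by (cases m) (auto simp: power2_eq_square algebra_simps)
      then show ?thesis using p0 by (simp add: mult.assoc mult_left_mono)
    qed
    also have "\<dots> = 2 * 3 ^ (k * max_occurrence n F) * real n ^ k * real m ^ 2 * \<phi>"
      unfolding N_def by (simp add: algebra_simps)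
    finally show ?thesis unfolding eq by (intro ennreal_leI)
  qed
  finally show "(\<integral>\<^sup>+ w. max_iterations n k F w \<partial>weight_distr (length F) f)
          \<le> ennreal (2 * 3 ^ (k * max_occurrence n F) * real n ^ k * real (length F) ^ 2 * \<phi>)"
    unfolding W_def m_def .
qed (simp)

end
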